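(* Let $k\ge1$ and $n$ be integers. For the graph $G(n,k)$ the following are equivalent: (A) $k-1$ lies in the tail; (B) $n_k$ lies in the tail; (C) $(n-1)_{k+1}$ lies in the tail.
   Context: For an integer $\ell$, $\ell_k$ and $\ell_{k+1}$ denote the least nonnegative residues of $\ell$ modulo $k$ and $k+1$. $G(n,k)$ is the directed graph on vertices $0,1,\dots,k$ whose edges are exactly the $k$ edges $(i+n-2)_{k+1}\to(i+n-1)_k$, $1\le i\le k$; a loop $a\to a$ counts as a cycle. Vertex $k$ has in-degree $0$, vertex $(n-2)_{k+1}$ has out-degree $0$, and all other vertices have in- and out-degree $1$, so $G(n,k)$ is a disjoint union of directed cycles and one directed path, the tail, from $k$ to $(n-2)_{k+1}$ (consisting of the single vertex $k$ if $k=(n-2)_{k+1}$). *)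

theory Defs
  imports Main
begin

text \<open>Edges of G(n,k): (i+n-2) mod (k+1) \<rightarrow> (i+n-1) mod k for 1 \<le> i \<le> k.
  Residues are least nonnegative residues (Isabelle's int mod with positive modulus).\<close>
definition Gedges :: "int \<Rightarrow> int \<Rightarrow> (int \<times> int) set" where
  "Gedges n k = {((i + n - 2) mod (k + 1), (i + n - 1) mod k) | i. 1 \<le> i \<and> i \<le> k}"

text \<open>The tail: the directed path starting at vertex k (which has in-degree 0);
  its vertex set is the set of vertices reachable from k along edges.\<close>
definition tail :: "int \<Rightarrow> int \<Rightarrow> int set" where
  "tail n k = {v. (k, v) \<in> (Gedges n k)\<^sup>*}"

end

theory Submission
  imports Defs
begin

lemma comp_paths:
  assumes inj: "\<And>u w v. (u,v)\<in>r \<Longrightarrow> (w,v)\<in>r \<Longrightarrow> u=w"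
  and ux: "(u,x)\<in>r\<^sup>*"
  shows "(w,x)\<in>r\<^sup>* \<Longrightarrow> (u,w)\<in>r\<^sup>* \<or> (w,u)\<in>r\<^sup>*"
  using ux
proof (induction arbitrary: w rule: rtrancl_induct)
  case base
  then show ?case by simp
next
  case (step y z)
  from step.prems show ?case
  proof (cases rule: rtranclE)
    case base
    then show ?thesis using step.hyps(1) step.hyps(2) by auto
  next
    case (step y')
    then have "y' = y" using inj \<open>(y,z)\<in>r\<close> by blast
    then show ?thesis using step.IH step by auto
  qed
qed

lemma reach_end:
  assumes inj: "\<And>u w v. (u,v)\<in>r \<Longrightarrow> (w,v)\<in>r \<Longrightarrow> u=w"
  and noin: "\<And>u. (u,s)\<notin>r"
  and out: "\<And>v. (s,v)\<in>r\<^sup>* \<Longrightarrow> v\<noteq>h \<Longrightarrow> \<exists>w. (v,w)\<in>r"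
  and fin: "finite {v. (s,v)\<in>r\<^sup>*}"
  shows "(s,h)\<in>r\<^sup>*"
proof (rule ccontr)
  assume nh: "(s,h)\<notin>r\<^sup>*"
  define R where "R = {v. (s,v)\<in>r\<^sup>*}"
  define f where "f v = (SOME w. (v,w)\<in>r)" for v
  have fr: "(v, f v) \<in> r" if vR: "v \<in> R" for v
  proof -
    have "v \<noteq> h" using vR nh R_def by auto
    then obtain w where "(v,w)\<in>r" using out vR R_def by auto
    then show ?thesis unfolding f_def by (rule someI)
  qed
  have sub: "f ` R \<subseteq> R"
  proof
    fix y assume "y \<in> f ` R"
    then obtain v where v: "v \<in> R" "y = f v" by blast
    have "(s, v) \<in> r\<^sup>*" using v(1) unfolding R_def by simp
    moreover have "(v, f v) \<in> r" using fr v(1) by simp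
    ultimately have "(s, f v) \<in> r\<^sup>*" by (rule rtrancl_into_rtrancl)
    then show "y \<in> R" using v(2) unfolding R_def by simp
  qed
  have "inj_on f R"
  proof (rule inj_onI)
    fix x y assume "x \<in> R" "y \<in> R" "f x = f y"
    then have "(x, f x) \<in> r" "(y, f x) \<in> r" using fr[of x] fr[of y] by simp_all
    then show "x = y" by (rule inj)
  qed
  moreover have "finite R" using fin unfolding R_def .
  ultimately have fR: "f ` R = R" using endo_inj_surj[OF _ sub] by simp
  have "s \<in> R" using R_def by simp
  then have "s \<in> f ` R" using fR by simp
  then obtain v where "v \<in> R" "f v = s" by (auto simp only: image_iff)
  then have "(v, s) \<in> r" using fr by blast
  then show False using noin by blast
qed

lemma tail_char:
  assumes inj: "\<And>u w v. (u,v)\<in>r \<Longrightarrow> (w,v)\<in>r \<Longrightarrow> u=w"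
  and func: "\<And>u w v. (u,v)\<in>r \<Longrightarrow> (u,w)\<in>r \<Longrightarrow> v=w"
  and noin: "\<And>u. (u,s)\<notin>r"
  and noout: "\<And>u. (h,u)\<notin>r"
  and sh: "(s,h)\<in>r\<^sup>*"
  shows "(s,v)\<in>r\<^sup>* \<longleftrightarrow> (v,h)\<in>r\<^sup>*"
proof
  assume sv: "(s,v)\<in>r\<^sup>*"
  have inj': "\<And>u w v. (u,v)\<in>r\<inverse> \<Longrightarrow> (w,v)\<in>r\<inverse> \<Longrightarrow> u=w" using func by blast
  have "(v,s)\<in>(r\<inverse>)\<^sup>*" "(h,s)\<in>(r\<inverse>)\<^sup>*" using sv sh by (simp_all add: rtrancl_converse)
  from comp_paths[OF inj' this]
  have "(h,v)\<in>r\<^sup>* \<or> (v,h)\<in>r\<^sup>*" by (simp add: rtrancl_converse)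
  then show "(v,h)\<in>r\<^sup>*"
  proof
    assume "(h,v)\<in>r\<^sup>*"
    then have "v = h" using noout by (cases rule: converse_rtranclE) auto
    then show ?thesis by simp
  qed
next
  assume "(v,h)\<in>r\<^sup>*"
  from comp_paths[OF inj this sh]
  have "(v,s)\<in>r\<^sup>* \<or> (s,v)\<in>r\<^sup>*" .
  then show "(s,v)\<in>r\<^sup>*"
  proof
    assume "(v,s)\<in>r\<^sup>*"
    then have "v = s" using noin by (cases rule: rtranclE) auto
    then show ?thesis by simp
  qed
qed


lemma mod_inj_window:
  fixes i j c m :: int
  assumes "1 \<le> i" "i \<le> k" "1 \<le> j" "j \<le> k" "k \<le> m"
    and "(i + c) mod m = (j + c) mod m"
  shows "i = j"
proof -
  have "m dvd (i + c) - (j + c)" using assms(6) by (simp add: mod_eq_dvd_iff)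
  then have d: "m dvd i - j" by simp
  show ?thesis
  proof (rule ccontr)
    assume "i \<noteq> j"
    then have "\<bar>m\<bar> \<le> \<bar>i - j\<bar>" using d dvd_imp_le_int by auto
    then show False using assms by auto
  qed
qed

lemma E_inj:
  assumes "k \<ge> 1" "(u,v) \<in> Gedges n k" "(w,v) \<in> Gedges n k"
  shows "u = w"
proof -
  obtain i where i: "u = (i + n - 2) mod (k + 1)" "v = (i + n - 1) mod k" "1 \<le> i" "i \<le> k"
    using assms(2) unfolding Gedges_def by auto
  obtain j where j: "w = (j + n - 2) mod (k + 1)" "v = (j + n - 1) mod k" "1 \<le> j" "j \<le> k"
    using assms(3) unfolding Gedges_def by auto
  have "(i + (n - 1)) mod k = (j + (n - 1)) mod k" using i j by (simp add: algebra_simps)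
  then have "i = j" using mod_inj_window[of i k j k "n - 1"] i j by auto
  then show ?thesis using i j by simp
qed

lemma E_func:
  assumes "k \<ge> 1" "(u,v) \<in> Gedges n k" "(u,w) \<in> Gedges n k"
  shows "v = w"
proof -
  obtain i where i: "u = (i + n - 2) mod (k + 1)" "v = (i + n - 1) mod k" "1 \<le> i" "i \<le> k"
    using assms(2) unfolding Gedges_def by auto
  obtain j where j: "u = (j + n - 2) mod (k + 1)" "w = (j + n - 1) mod k" "1 \<le> j" "j \<le> k"
    using assms(3) unfolding Gedges_def by auto
  have "(i + (n - 2)) mod (k+1) = (j + (n - 2)) mod (k+1)" using i j by (simp add: algebra_simps)
  then have "i = j" using mod_inj_window[of i k j "k+1" "n - 2"] i j by auto
  then show ?thesis using i j by simp
qed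

lemma E_noin:
  assumes "k \<ge> 1" shows "(u,k) \<notin> Gedges n k"
proof
  assume "(u,k) \<in> Gedges n k"
  then obtain i where "k = (i + n - 1) mod k" unfolding Gedges_def by auto
  moreover have "(i + n - 1) mod k < k" using assms by simp
  ultimately show False by simp
qed

lemma E_noout:
  assumes "k \<ge> 1" shows "((n - 2) mod (k+1), u) \<notin> Gedges n k"
proof
  assume "((n - 2) mod (k+1), u) \<in> Gedges n k"
  then obtain i where i: "(n - 2) mod (k + 1) = (i + n - 2) mod (k + 1)" "1 \<le> i" "i \<le> k"
    unfolding Gedges_def by auto
  then have "(k + 1) dvd (i + n - 2) - (n - 2)" by (metis mod_eq_dvd_iff)
  then have "(k + 1) dvd i" by simp
  then show False using i zdvd_imp_le by fastforce
qed

lemma E_range: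
  assumes "k \<ge> 1" "(u,v) \<in> Gedges n k"
  shows "0 \<le> u \<and> u \<le> k \<and> 0 \<le> v \<and> v < k"
proof -
  obtain i where i: "u = (i + n - 2) mod (k + 1)" "v = (i + n - 1) mod k"
    using assms(2) unfolding Gedges_def by auto
  have "(i + n - 2) mod (k + 1) < k + 1" using assms(1) pos_mod_bound[of "k+1"] by simp
  then show ?thesis using i assms(1) by simp
qed

lemma reach_range:
  assumes "k \<ge> 1" "(k,v) \<in> (Gedges n k)\<^sup>*"
  shows "0 \<le> v \<and> v \<le> k"
  using assms(2)
proof (cases rule: rtranclE)
  case base then show ?thesis using assms by simp
next
  case (step y) then show ?thesis using E_range[OF assms(1)] by force
qed

lemma E_out:
  assumes "k \<ge> 1" "0 \<le> v" "v \<le> k" "v \<noteq> (n - 2) mod (k+1)"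
  shows "\<exists>w. (v,w) \<in> Gedges n k"
proof -
  define i where "i = (v - n + 1) mod (k+1) + 1"
  have "(v - n + 1) mod (k+1) < k + 1" using assms(1) pos_mod_bound[of "k+1"] by simp
  then have i1: "1 \<le> i" "i \<le> k + 1" unfolding i_def using assms by auto
  have vi: "(i + n - 2) mod (k+1) = v"
  proof -
    have "(i + n - 2) mod (k+1) = ((v - n + 1) mod (k+1) + (n - 1)) mod (k+1)"
      unfolding i_def by (simp add: algebra_simps)
    also have "\<dots> = ((v - n + 1) + (n - 1)) mod (k+1)" by (simp add: mod_add_left_eq)
    also have "\<dots> = v" using assms by simp
    finally show ?thesis .
  qed
  have "i \<noteq> k + 1"
  proof
    assume "i = k + 1"
    then have "(k + 1 + n - 2) mod (k+1) = v" using vi by simp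
    moreover have "(k + 1 + n - 2) mod (k+1) = (n - 2) mod (k+1)"
      by (metis add.commute add_diff_eq mod_add_self2)
    ultimately show False using assms by simp
  qed
  then have "i \<le> k" using i1 by simp
  then have "(v, (i + n - 1) mod k) \<in> Gedges n k"
    unfolding Gedges_def using vi i1 by auto
  then show ?thesis by blast
qed


lemma E_anti:
  assumes k1: "k \<ge> 1" and uv: "(u,v) \<in> Gedges n k"
  shows "((n - 3 - v) mod (k+1), (n - 3 - u) mod (k+1)) \<in> Gedges n k"
proof -
  obtain i where i: "u = (i + n - 2) mod (k + 1)" "v = (i + n - 1) mod k" "1 \<le> i" "i \<le> k"
    using uv unfolding Gedges_def by auto
  define t where "t = (i + n - 1) mod k"
  have t: "0 \<le> t" "t < k" unfolding t_def using k1 by simp_all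
  define j where "j = k - t"
  have j: "1 \<le> j" "j \<le> k" using t j_def by auto
  have e1: "(j + n - 2) mod (k+1) = (n - 3 - v) mod (k+1)"
  proof -
    have "j + n - 2 = (n - 3 - v) + 1 * (k + 1)" using i(2) t_def j_def by simp
    then show ?thesis by (metis mod_mult_self1)
  qed
  have "(n - 3 - u) mod (k+1) = (n - 3 - (i + n - 2)) mod (k+1)"
    using i(1) by (simp add: mod_diff_right_eq)
  also have "\<dots> = ((k - i) + (-1) * (k+1)) mod (k+1)" by (simp add: algebra_simps)
  also have "\<dots> = (k - i) mod (k+1)" by (metis mod_mult_self1)
  also have "\<dots> = k - i" using i by simp
  finally have r1: "(n - 3 - u) mod (k+1) = k - i" .
  have "(j + n - 1) mod k = ((n - 1 - t) + k) mod k" unfolding j_def by (simp add: algebra_simps)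
  also have "\<dots> = (n - 1 - t) mod k" by simp
  also have "\<dots> = (n - 1 - (i + n - 1)) mod k" unfolding t_def by (simp add: mod_diff_right_eq)
  also have "\<dots> = ((k - i) + (-1) * k) mod k" by (simp add: algebra_simps)
  also have "\<dots> = (k - i) mod k" by (metis mod_mult_self1)
  also have "\<dots> = k - i" by (rule mod_pos_pos_trivial) (use i in auto)
  finally have r2: "(j + n - 1) mod k = (n - 3 - u) mod (k+1)" using r1 by simp
  show ?thesis unfolding Gedges_def using e1 r2 j by force
qed

lemma E_anti_rtrancl:
  assumes k1: "k \<ge> 1" and uv: "(u,v) \<in> (Gedges n k)\<^sup>*"
  shows "((n - 3 - v) mod (k+1), (n - 3 - u) mod (k+1)) \<in> (Gedges n k)\<^sup>*"
  using uv
proof (induction rule: rtrancl_induct)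
  case base then show ?case by simp
next
  case (step y z)
  have "((n - 3 - z) mod (k+1), (n - 3 - y) mod (k+1)) \<in> Gedges n k"
    using E_anti[OF k1 step.hyps(2)] .
  then show ?case using step.IH by (rule converse_rtrancl_into_rtrancl)
qed

theorem lemma4p5:
  fixes n k :: int
  assumes "k \<ge> 1"
  shows "(k - 1 \<in> tail n k \<longleftrightarrow> n mod k \<in> tail n k)
       \<and> (n mod k \<in> tail n k \<longleftrightarrow> (n - 1) mod (k + 1) \<in> tail n k)"
proof -
  define E where "E = Gedges n k"
  define h where "h = (n - 2) mod (k+1)"
  define a where "a = (n - 1) mod (k+1)"
  have inj: "\<And>u w v. (u,v)\<in>E \<Longrightarrow> (w,v)\<in>E \<Longrightarrow> u=w"
    unfolding E_def using E_inj[OF assms] by blast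
  have func: "\<And>u w v. (u,v)\<in>E \<Longrightarrow> (u,w)\<in>E \<Longrightarrow> v=w"
    unfolding E_def using E_func[OF assms] by blast
  have noin: "\<And>u. (u,k)\<notin>E" unfolding E_def using E_noin[OF assms] by blast
  have noout: "\<And>u. (h,u)\<notin>E" unfolding E_def h_def using E_noout[OF assms] by blast
  have out: "\<And>v. (k,v)\<in>E\<^sup>* \<Longrightarrow> v\<noteq>h \<Longrightarrow> \<exists>w. (v,w)\<in>E"
    unfolding E_def h_def using E_out[OF assms] reach_range[OF assms] by blast
  have fin: "finite {v. (k,v)\<in>E\<^sup>*}"
  proof (rule finite_subset)
    show "{v. (k,v)\<in>E\<^sup>*} \<subseteq> {0..k}" unfolding E_def using reach_range[OF assms] by auto
  qed simp
  have kh: "(k,h)\<in>E\<^sup>*" using reach_end[OF inj noin out fin] .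
  have tc: "\<And>v. (k,v)\<in>E\<^sup>* \<longleftrightarrow> (v,h)\<in>E\<^sup>*" using tail_char[OF inj func noin noout kh] .
  have T: "\<And>v. v \<in> tail n k \<longleftrightarrow> (k,v)\<in>E\<^sup>*" unfolding tail_def E_def by simp
  have edge: "(a, n mod k) \<in> E" unfolding E_def Gedges_def a_def
    using assms by (auto intro!: exI[of _ 1])
  have s_k: "(n - 3 - k) mod (k+1) = h"
  proof -
    have "n - 3 - k = (n - 2) + (-1) * (k+1)" by simp
    then show ?thesis unfolding h_def by (metis mod_mult_self1)
  qed
  have s_k1: "(n - 3 - (k - 1)) mod (k+1) = a"
  proof -
    have "n - 3 - (k - 1) = (n - 1) + (-1) * (k+1)" by simp
    then show ?thesis unfolding a_def by (metis mod_mult_self1)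
  qed
  have s_a: "(n - 3 - a) mod (k+1) = k - 1"
  proof -
    have "(n - 3 - a) mod (k+1) = (n - 3 - (n - 1)) mod (k+1)" unfolding a_def
      by (simp add: mod_diff_right_eq)
    also have "\<dots> = ((k - 1) + (-1) * (k+1)) mod (k+1)" by simp
    also have "\<dots> = (k - 1) mod (k+1)" by (metis mod_mult_self1)
    also have "\<dots> = k - 1" using assms by simp
    finally show ?thesis .
  qed
  have s_h: "(n - 3 - h) mod (k+1) = k"
  proof -
    have "(n - 3 - h) mod (k+1) = (n - 3 - (n - 2)) mod (k+1)" unfolding h_def
      by (simp add: mod_diff_right_eq)
    also have "\<dots> = (k + (-1) * (k+1)) mod (k+1)" by simp
    also have "\<dots> = k mod (k+1)" by (metis mod_mult_self1)
    also have "\<dots> = k" using assms by simp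
    finally show ?thesis .
  qed
  have AC: "(k, k - 1)\<in>E\<^sup>* \<longleftrightarrow> (k, a)\<in>E\<^sup>*"
  proof
    assume "(k, k - 1)\<in>E\<^sup>*"
    then have "(k - 1, h)\<in>E\<^sup>*" using tc by blast
    from E_anti_rtrancl[OF assms this[unfolded E_def]]
    show "(k, a)\<in>E\<^sup>*" using s_h s_k1 E_def by simp
  next
    assume "(k, a)\<in>E\<^sup>*"
    from E_anti_rtrancl[OF assms this[unfolded E_def]]
    have "(k - 1, h)\<in>E\<^sup>*" using s_a s_k E_def by simp
    then show "(k, k - 1)\<in>E\<^sup>*" using tc by blast
  qed
  have BC: "(k, n mod k)\<in>E\<^sup>* \<longleftrightarrow> (k, a)\<in>E\<^sup>*"
  proof
    assume "(k, a)\<in>E\<^sup>*"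
    then show "(k, n mod k)\<in>E\<^sup>*" using edge by (rule rtrancl_into_rtrancl)
  next
    assume "(k, n mod k)\<in>E\<^sup>*"
    then show "(k, a)\<in>E\<^sup>*"
    proof (cases rule: rtranclE)
      case base
      have "n mod k < k" using assms by simp
      then show ?thesis using base by simp
    next
      case (step y)
      then have "y = a" using inj edge by blast
      then show ?thesis using step by simp
    qed
  qed
  show ?thesis using AC BC T a_def by simp
qed

end
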